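(* Let $n\ge2$ be an integer and $\lambda>0$, and let $\gamma(t)=(\omega(t),x(t),y(t))$, $t\in(S,T)$ the maximal interval of existence, be a solution with $\omega>0$ of the system $$\frac{d\omega}{dt}=x\omega,\qquad \frac{dx}{dt}=x^2-xy+n-1-\lambda\omega^2,\qquad \frac{dy}{dt}=xy-nx^2-\lambda\omega^2.$$ Then the quantity $Q=y/\omega$ is strictly decreasing along $\gamma$. If moreover $\int_{t_0}^T\omega(\sigma)\,d\sigma=\infty$ for some (equivalently every) $t_0\in(S,T)$, then $\lim_{t\to T}Q(t)=-\infty$; in particular $y(t)<0$ for all $t$ sufficiently close to $T$. *)

theory Defs
  imports "HOL-Analysis.Analysis" "HOL-Library.Extended_Real"
begin

definition ival :: "ereal \<Rightarrow> ereal \<Rightarrow> real set" where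
  "ival S T = {t. S < ereal t \<and> ereal t < T}"

definition ode_sol ::
  "nat \<Rightarrow> real \<Rightarrow> (real \<Rightarrow> real) \<Rightarrow> (real \<Rightarrow> real) \<Rightarrow> (real \<Rightarrow> real) \<Rightarrow> real set \<Rightarrow> bool" where
  "ode_sol n lam w x y I \<longleftrightarrow>
     (\<forall>t\<in>I.
        (w has_real_derivative (x t * w t)) (at t) \<and>
        (x has_real_derivative (x t ^ 2 - x t * y t + real n - 1 - lam * w t ^ 2)) (at t) \<and>
        (y has_real_derivative (x t * y t - real n * x t ^ 2 - lam * w t ^ 2)) (at t))"

definition maximal_sol ::
  "nat \<Rightarrow> real \<Rightarrow> (real \<Rightarrow> real) \<Rightarrow> (real \<Rightarrow> real) \<Rightarrow> (real \<Rightarrow> real) \<Rightarrow> ereal \<Rightarrow> ereal \<Rightarrow> bool" where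
  "maximal_sol n lam w x y S T \<longleftrightarrow>
     S < T \<and> ode_sol n lam w x y (ival S T) \<and>
     \<not> (\<exists>S' T' w' x' y'. S' \<le> S \<and> T \<le> T' \<and> (S' < S \<or> T < T') \<and>
          ode_sol n lam w' x' y' (ival S' T') \<and>
          (\<forall>t\<in>ival S T. w' t = w t \<and> x' t = x t \<and> y' t = y t))"

definition to_right_end :: "ereal \<Rightarrow> real filter" where
  "to_right_end T = (if T = \<infinity> then at_top else at_left (real_of_ereal T))"

end

theory Submission
  imports Defs
begin

lemma ival_convex: "s \<in> ival S T \<Longrightarrow> t \<in> ival S T \<Longrightarrow> s \<le> u \<Longrightarrow> u \<le> t \<Longrightarrow> u \<in> ival S T"
proof -
  assume a: "s \<in> ival S T" "t \<in> ival S T" "s \<le> u" "u \<le> t"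
  have "ereal s \<le> ereal u" "ereal u \<le> ereal t" using a by auto
  moreover have "S < ereal s" "ereal t < T" using a unfolding ival_def by auto
  ultimately have "S < ereal u" "ereal u < T" using less_le_trans le_less_trans by blast+
  then show ?thesis unfolding ival_def by simp
qed

lemma seq_to_end:
  fixes t0 :: real and T :: ereal
  assumes "ereal t0 < T"
  obtains u :: "nat \<Rightarrow> real" where "incseq u" "u 0 = t0" "\<And>k. ereal (u k) < T"
    "\<And>s. t0 \<le> s \<Longrightarrow> ereal s < T \<Longrightarrow> \<exists>k. s \<le> u k"
proof (cases T)
  case (real b)
  define u where "u k = b - (b - t0) / (real k + 1)" for k
  have bt: "t0 < b" using assms real by simp
  have "incseq u"
    unfolding incseq_def
  proof (intro allI impI)
    fix i j :: nat assume "i \<le> j"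
    then have "(b - t0) * (real j - real i) \<ge> 0" using bt by simp
    then show "u i \<le> u j" unfolding u_def using bt by (simp add: field_simps algebra_simps)
  qed
  moreover have "u 0 = t0" by (simp add: u_def)
  moreover have "ereal (u k) < T" for k using bt real by (simp add: u_def)
  moreover have "\<exists>k. s \<le> u k" if "t0 \<le> s" "ereal s < T" for s
  proof -
    have sb: "s < b" using that real by simp
    obtain k :: nat where k: "(b - t0) / (b - s) \<le> real k" using real_arch_simple by blast
    have "(b - t0) / (real k + 1) \<le> b - s"
      using k sb bt by (simp add: field_simps)
    then show ?thesis by (intro exI[of _ k]) (simp add: u_def)
  qed
  ultimately show ?thesis using that by blast
next
  case PInf
  define u where "u k = t0 + real k" for k
  have "incseq u" unfolding incseq_def u_def by auto
  moreover have "u 0 = t0" by (simp add: u_def)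
  moreover have "ereal (u k) < T" for k using PInf by simp
  moreover have "\<exists>k. s \<le> u k" for s
  proof -
    obtain k :: nat where "s - t0 \<le> real k" using real_arch_simple by blast
    then show ?thesis by (intro exI[of _ k]) (simp add: u_def)
  qed
  ultimately show ?thesis using that by blast
next
  case MInf
  then show ?thesis using assms by simp
qed

theorem lemma3p5:
  fixes n :: nat and lam :: real and w x y :: "real \<Rightarrow> real" and S T :: ereal
  assumes "n \<ge> 2" and "lam > 0"
    and "maximal_sol n lam w x y S T"
    and "\<forall>t\<in>ival S T. w t > 0"
  shows "(\<forall>s\<in>ival S T. \<forall>t\<in>ival S T. s < t \<longrightarrow> y t / w t < y s / w s)
    \<and> ((\<exists>t0\<in>ival S T. (\<integral>\<^sup>+ s\<in>{s. t0 \<le> s \<and> ereal s < T}. ennreal (w s) \<partial>lborel) = \<infinity>)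
        \<longrightarrow> filterlim (\<lambda>t. y t / w t) at_bot (to_right_end T)
            \<and> (\<forall>\<^sub>F t in to_right_end T. y t < 0))"
proof -
  define I where "I = ival S T"
  define Q where "Q t = y t / w t" for t
  define Q' where "Q' t = - (real n * x t ^ 2 / w t) - lam * w t" for t
  have sol: "ode_sol n lam w x y I" using assms(3) unfolding maximal_sol_def I_def by blast
  have wpos: "t \<in> I \<Longrightarrow> w t > 0" for t using assms(4) I_def by auto
  have dw: "t \<in> I \<Longrightarrow> (w has_real_derivative (x t * w t)) (at t)" for t
    using sol unfolding ode_sol_def by blast
  have dy: "t \<in> I \<Longrightarrow> (y has_real_derivative (x t * y t - real n * x t ^ 2 - lam * w t ^ 2)) (at t)" for t
    using sol unfolding ode_sol_def by blast
  have dQ: "(Q has_real_derivative Q' t) (at t)" if t: "t \<in> I" for t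
  proof -
    have "((\<lambda>t. y t / w t) has_real_derivative
       ((x t * y t - real n * x t ^ 2 - lam * w t ^ 2) * w t - y t * (x t * w t)) / (w t * w t)) (at t)"
      by (rule DERIV_divide[OF dy[OF t] dw[OF t]]) (use wpos[OF t] in simp)
    then show ?thesis unfolding Q_def[abs_def]
    proof (rule DERIV_cong)
      have wne: "w t \<noteq> 0" using wpos[OF t] by simp
      have e: "(x t * y t - real n * x t ^ 2 - lam * w t ^ 2) * w t - y t * (x t * w t)
          = (- (real n * x t ^ 2) - lam * w t ^ 2) * w t"
        by (simp add: algebra_simps)
      have "(- (real n * x t ^ 2) - lam * w t ^ 2) * w t / (w t * w t)
          = (- (real n * x t ^ 2) - lam * w t ^ 2) / w t"
        using wne by simp
      also have "\<dots> = Q' t" unfolding Q'_def using wne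
        by (simp add: diff_divide_distrib power2_eq_square)
      finally show "((x t * y t - real n * x t ^ 2 - lam * w t ^ 2) * w t - y t * (x t * w t)) / (w t * w t) = Q' t"
        using e by simp
    qed
  qed
  have Q'le: "t \<in> I \<Longrightarrow> Q' t \<le> - lam * w t" for t
    using wpos[of t] unfolding Q'_def by simp
  have Q'neg: "t \<in> I \<Longrightarrow> Q' t < 0" for t
  proof -
    assume t: "t \<in> I"
    have "0 < lam * w t" using wpos[OF t] assms(2) by simp
    then show ?thesis using Q'le[OF t] by linarith
  qed
  have dec: "Q t < Q s" if "s \<in> I" "t \<in> I" "s < t" for s t
  proof (rule DERIV_neg_imp_decreasing[OF \<open>s < t\<close>])
    fix u assume "s \<le> u" "u \<le> t"
    then have "u \<in> I" using ival_convex[of s S T t u] that unfolding I_def by blast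
    then show "\<exists>y. (Q has_real_derivative y) (at u) \<and> y < 0" using dQ Q'neg by blast
  qed
  have intbound: "(w has_integral integral {a..b} w) {a..b} \<and> Q b \<le> Q a - lam * integral {a..b} w"
    if ab: "a \<in> I" "b \<in> I" "a \<le> b" for a b
  proof -
    have sub: "{a..b} \<subseteq> I" using ab ival_convex[of a S T b] unfolding I_def by auto
    have "continuous_on {a..b} w"
      using sub dw by (meson DERIV_isCont continuous_at_imp_continuous_on subsetD)
    then have wi: "(w has_integral integral {a..b} w) {a..b}"
      using integrable_continuous_real by blast
    have "(Q' has_integral (Q b - Q a)) {a..b}"
    proof (rule fundamental_theorem_of_calculus[OF ab(3)])
      fix u assume "u \<in> {a..b}"
      then have "u \<in> I" using sub by blast
      then have "(Q has_vector_derivative Q' u) (at u)"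
        using dQ by (simp only: has_real_derivative_iff_has_vector_derivative)
      then show "(Q has_vector_derivative Q' u) (at u within {a..b})"
        by (rule has_vector_derivative_at_within)
    qed
    moreover have "((\<lambda>s. - lam * w s) has_integral (- lam * integral {a..b} w)) {a..b}"
      using has_integral_mult_right[OF wi, of "- lam"] by simp
    ultimately have "Q b - Q a \<le> - lam * integral {a..b} w"
    proof (rule has_integral_le)
      fix v assume "v \<in> {a..b}"
      then have "v \<in> I" using sub by blast
      then show "Q' v \<le> - lam * w v" by (rule Q'le)
    qed
    with wi show ?thesis by simp
  qed
  have part1: "\<forall>s\<in>ival S T. \<forall>t\<in>ival S T. s < t \<longrightarrow> y t / w t < y s / w s"
  proof (intro ballI impI)
    fix s t assume "s \<in> ival S T" "t \<in> ival S T" "s < t"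
    then show "y t / w t < y s / w s" using dec[of s t] unfolding I_def Q_def by simp
  qed
  have part2: "filterlim Q at_bot (to_right_end T) \<and> (\<forall>\<^sub>F t in to_right_end T. y t < 0)"
    if t0: "t0 \<in> I" and inf: "(\<integral>\<^sup>+ s\<in>{s. t0 \<le> s \<and> ereal s < T}. ennreal (w s) \<partial>lborel) = \<infinity>" for t0
  proof -
    have t0T: "ereal t0 < T" "S < ereal t0" using t0 unfolding I_def ival_def by auto
    obtain u where u: "incseq u" "u 0 = t0" "\<And>k. ereal (u k) < T"
      "\<And>s. t0 \<le> s \<Longrightarrow> ereal s < T \<Longrightarrow> \<exists>k. s \<le> u k"
      using seq_to_end[OF t0T(1)] by blast
    have ut0: "t0 \<le> u k" for k using u(1,2) by (metis incseq_def le0)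
    have uI: "u k \<in> I" for k using ut0[of k] u(3)[of k] t0T unfolding I_def ival_def
      by (auto intro: less_le_trans)
    have subk: "{t0..u k} \<subseteq> I" for k using t0 uI[of k] ival_convex[of t0 S T "u k"] unfolding I_def by auto
    define f where "f k s = ennreal (w s) * indicator {t0..u k} s" for k s
    have fint: "integral\<^sup>N lborel (f k) = ennreal (integral {t0..u k} w)" for k
    proof -
      have "(w has_integral integral {t0..u k} w) {t0..u k}"
        using intbound[OF t0 uI ut0] by blast
      moreover have "s \<in> {t0..u k} \<Longrightarrow> 0 \<le> w s" for s
        using wpos subk[of k] by (meson less_eq_real_def subsetD)
      ultimately show ?thesis unfolding f_def by (rule nn_integral_has_integral_lebesgue'[rotated])
    qed
    have fmeas: "f k \<in> borel_measurable lborel" for k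
    proof -
      have sub: "{t0..u k} \<subseteq> I" by (rule subk)
      have "continuous_on {t0..u k} w"
        using sub dw by (meson DERIV_isCont continuous_at_imp_continuous_on subsetD)
      then have "(\<lambda>s. indicator {t0..u k} s *\<^sub>R w s) \<in> borel_measurable borel"
        by (intro borel_measurable_continuous_on_indicator) auto
      then have "(\<lambda>s. ennreal (indicator {t0..u k} s *\<^sub>R w s)) \<in> borel_measurable lborel"
        by simp
      moreover have "ennreal (indicator {t0..u k} s *\<^sub>R w s) = f k s" for s
        unfolding f_def by (auto simp: indicator_def)
      ultimately show ?thesis by simp
    qed
    have finc: "incseq f"
    proof (rule incseq_SucI, rule le_funI)
      fix k s
      have "u k \<le> u (Suc k)" using u(1) by (simp add: incseq_SucD)
      then show "f k s \<le> f (Suc k) s" unfolding f_def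
        by (auto simp: indicator_def)
    qed
    have supf: "(SUP k. f k s) = ennreal (w s) * indicator {s. t0 \<le> s \<and> ereal s < T} s" for s
    proof (cases "t0 \<le> s \<and> ereal s < T")
      case True
      then obtain k where "s \<le> u k" using u(4) by blast
      then have "f k s = ennreal (w s)" using True unfolding f_def by simp
      moreover have "f j s \<le> ennreal (w s)" for j unfolding f_def by (auto simp: indicator_def)
      ultimately have "(SUP k. f k s) = ennreal (w s)"
        by (intro antisym SUP_least) (auto intro: SUP_upper2[of k])
      then show ?thesis using True by simp
    next
      case False
      have "f k s = 0" for k
      proof -
        have "\<not> (t0 \<le> s \<and> s \<le> u k)"
        proof
          assume h: "t0 \<le> s \<and> s \<le> u k"
          then have "ereal s \<le> ereal (u k)" by simp
          then have "ereal s < T" using u(3)[of k] by (rule le_less_trans)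
          with h False show False by simp
        qed
        then show ?thesis unfolding f_def by simp
      qed
      then show ?thesis using False by simp
    qed
    have supI: "(SUP k. ennreal (integral {t0..u k} w)) = \<infinity>"
      using inf nn_integral_monotone_convergence_SUP[OF finc fmeas] supf fint by simp
    have ev: "eventually (\<lambda>t. t \<in> I \<and> r < t) (to_right_end T)" if r: "r \<in> I" for r
    proof (cases T)
      case (real b)
      have rb: "r < b" using r real unfolding I_def ival_def by simp
      have Sr: "S < ereal r" using r unfolding I_def ival_def by simp
      have "to_right_end T = at_left b" using real by (simp add: to_right_end_def)
      moreover have "eventually (\<lambda>t. t \<in> I \<and> r < t) (at_left b)"
      proof -
        have H: "t \<in> I \<and> r < t" if rt: "r < t" and tb: "t < b" for t
        proof -
        have "ereal r < ereal t" using rt by simp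
        then have "S < ereal t" using Sr by (rule less_trans[rotated])
        moreover have "ereal t < T" using tb real by simp
        ultimately show "t \<in> I \<and> r < t" using rt unfolding I_def ival_def by simp
        qed
        show ?thesis unfolding eventually_at_left[OF rb] using rb H by blast
      qed
      ultimately show ?thesis by simp
    next
      case PInf
      have Sr: "S < ereal r" using r unfolding I_def ival_def by simp
      have "to_right_end T = at_top" using PInf by (simp add: to_right_end_def)
      moreover have "eventually (\<lambda>t. t \<in> I \<and> r < t) at_top"
        using eventually_gt_at_top[of r]
      proof (rule eventually_mono)
        fix t assume rt: "r < t"
        have "ereal r < ereal t" using rt by simp
        then have "S < ereal t" using Sr by (rule less_trans[rotated])
        then show "t \<in> I \<and> r < t" using rt PInf unfolding I_def ival_def by simp
      qed
      ultimately show ?thesis by simp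
    next
      case MInf
      then show ?thesis using r unfolding I_def ival_def by simp
    qed
    have lim: "filterlim Q at_bot (to_right_end T)"
      unfolding filterlim_at_bot
    proof
      fix Z
      define c where "c = max 0 ((Q t0 - Z) / lam)"
      have c0: "0 \<le> c" unfolding c_def by simp
      have "ennreal c < (SUP k. ennreal (integral {t0..u k} w))" unfolding supI by simp
      then obtain k where k: "ennreal c < ennreal (integral {t0..u k} w)"
        by (auto simp: less_SUP_iff)
      then have ck: "c < integral {t0..u k} w"
        using c0 by (metis ennreal_leI not_less)
      have "(Q t0 - Z) / lam \<le> c" unfolding c_def by simp
      then have "Q t0 - Z \<le> lam * c" using assms(2) by (simp add: pos_divide_le_eq mult.commute)
      moreover have "lam * c < lam * integral {t0..u k} w" using ck assms(2) by simp
      moreover have "Q (u k) \<le> Q t0 - lam * integral {t0..u k} w"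
        using intbound[OF t0 uI ut0] by blast
      ultimately have QZ: "Q (u k) < Z" by linarith
      show "\<forall>\<^sub>F t in to_right_end T. Q t \<le> Z"
        using ev[OF uI[of k]]
      proof (rule eventually_mono)
        fix t assume "t \<in> I \<and> u k < t"
        then have "Q t < Q (u k)" using dec[of "u k" t] uI[of k] by blast
        then show "Q t \<le> Z" using QZ by simp
      qed
    qed
    have "eventually (\<lambda>t. Q t \<le> -1) (to_right_end T)"
      using lim unfolding filterlim_at_bot by blast
    then have "eventually (\<lambda>t. Q t \<le> -1 \<and> t \<in> I \<and> t0 < t) (to_right_end T)"
      using ev[OF t0] by (rule eventually_conj)
    then have "eventually (\<lambda>t. y t < 0) (to_right_end T)"
    proof (rule eventually_mono)
      fix t assume h: "Q t \<le> -1 \<and> t \<in> I \<and> t0 < t"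
      then have wt: "0 < w t" using wpos by blast
      show "y t < 0"
      proof (rule ccontr)
        assume "\<not> y t < 0"
        then have "0 \<le> y t / w t" using wt by simp
        then show False using h unfolding Q_def by simp
      qed
    qed
    with lim show ?thesis by blast
  qed
  show ?thesis using part1 part2 unfolding I_def Q_def by blast
qed

end
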